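(* The $b$-coupled spin-oscillator $(M,Z,\omega,F=(L,H))$ is a $b$-integrable system; in particular $\{L,H\}=0$ on all of $M$.
   Context: Fix constants $\rho_1,\rho_2>0$. Let $M=S^2\times\mathbb R^2$, where $S^2\subset\mathbb R^3$ is the unit sphere with coordinates $(x,y,z)$, $x^2+y^2+z^2=1$, and $(u,v)$ are coordinates on $\mathbb R^2$; let $Z=\{z=0\}\times\mathbb R^2$. On $\{|z|<1\}$ use cylindrical coordinates $(\theta,z)$ with $\theta=\arg(x+iy)$; on $\{z\neq0\}$ use $(x,y)$ as coordinates on each open hemisphere. The $b$-symplectic form is $\omega=-\rho_1\,\omega^b_{S^2}+\rho_2\,du\wedge dv$, where $\omega^b_{S^2}=d\theta\wedge\frac{dz}{z}$ on $\{|z|<1\}$ and $\omega^b_{S^2}=\frac{1}{1-x^2-y^2}dx\wedge dy$ on $\{z\ne0\}$. The $b$-coupled spin-oscillator is $F=(L,H)$ with $L=\rho_1\log|z|+\frac{\rho_2}{2}(u^2+v^2)$ and $H=\frac12(xu+yv)$. A $b$-integrable system on a $2n$-dimensional $b$-symplectic manifold $(M,Z,\omega)$ (a manifold with a hypersurface $Z$ and a closed nondegenerate 2-form in the $b$-cotangent bundle, i.e. allowing $\frac{dz}{z}$ terms for a defining function $z$ of $Z$) is an $n$-tuple of $b$-functions (functions locally of the form $c\log|z|+g$, $c\in\mathbb R$, $g$ smooth) that pairwise Poisson-commute for the bracket induced by $\omega$ and whose wedge of differentials, as a $b$-form, is nonzero almost everywhere on $M$ and almost everywhere on $Z$. *)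

theory Defs
  imports "HOL-Analysis.Analysis"
begin

text \<open>
  Points of the ambient space R^5 are tuples (x,y,z,u,v); the manifold
  M = S^2 x R^2 is the subset with x^2+y^2+z^2 = 1, and Z = {z = 0}.
  Chart parameters are tuples in R^4.  Functions on M are functions pt => real
  (only their values on M matter).
\<close>

type_synonym pt = "real \<times> real \<times> real \<times> real \<times> real"
type_synonym par = "real \<times> real \<times> real \<times> real"

definition Mset :: "pt set" where
  "Mset = {(x,y,z,u,v). x^2 + y^2 + z^2 = 1}"

definition zc :: "pt \<Rightarrow> real" where
  "zc p = fst (snd (snd p))"

definition Zset :: "pt set" where
  "Zset = {p \<in> Mset. zc p = 0}"

definition cyl :: "par \<Rightarrow> pt" where
  "cyl = (\<lambda>(th,z,u,v). (sqrt (1 - z^2) * cos th, sqrt (1 - z^2) * sin th, z, u, v))"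

definition cyl_dom :: "par set" where
  "cyl_dom = {(th,z,u,v). \<bar>z\<bar> < 1}"

definition hemi :: "real \<Rightarrow> par \<Rightarrow> pt" where
  "hemi s = (\<lambda>(x,y,u,v). (x, y, s * sqrt (1 - x^2 - y^2), u, v))"

definition hemi_dom :: "par set" where
  "hemi_dom = {(x,y,u,v). x^2 + y^2 < 1}"

definition ebas :: "nat \<Rightarrow> par" where
  "ebas i = (if i = 0 then (1,0,0,0) else if i = 1 then (0,1,0,0)
             else if i = 2 then (0,0,1,0) else (0,0,0,1))"

definition pd :: "nat \<Rightarrow> (par \<Rightarrow> real) \<Rightarrow> par \<Rightarrow> real" where
  "pd i F p = deriv (\<lambda>t. F (p + t *\<^sub>R ebas i)) 0"

text \<open>The b-derivative z d/dz in the cylinder chart; on Z (z = 0) it is defined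
  by continuous extension.\<close>
definition bz :: "(par \<Rightarrow> real) \<Rightarrow> par \<Rightarrow> real" where
  "bz F p = (let z = fst (snd p) in
     if z \<noteq> 0 then z * pd 1 F p
     else Lim (at 0) (\<lambda>t. t * pd 1 F (fst p, t, snd (snd p))))"

text \<open>Components of the b-differential of f in the b-coframe
  (d theta, dz/z, du, dv) of the cylinder chart, and of the ordinary
  differential in the coframe (dx, dy, du, dv) of a hemisphere chart.\<close>
definition bdiff_cyl :: "(pt \<Rightarrow> real) \<Rightarrow> par \<Rightarrow> nat \<Rightarrow> real" where
  "bdiff_cyl f p i = (if i = 1 then bz (f \<circ> cyl) p else pd i (f \<circ> cyl) p)"

definition diff_hemi :: "real \<Rightarrow> (pt \<Rightarrow> real) \<Rightarrow> par \<Rightarrow> nat \<Rightarrow> real" where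
  "diff_hemi s f p i = pd i (f \<circ> hemi s) p"

text \<open>Poisson bracket induced by the 2-form a e0/\e1 + b e2/\e3 (in a coframe
  e0..e3) on functions with coframe components df, dg:
  {f,g} = omega(X_f, X_g) with iota_{X_f} omega = - df, i.e.
  {f,g} = (1/a)(df0 dg1 - df1 dg0) + (1/b)(df2 dg3 - df3 dg2).\<close>
definition pb_coframe :: "real \<Rightarrow> real \<Rightarrow> (nat \<Rightarrow> real) \<Rightarrow> (nat \<Rightarrow> real) \<Rightarrow> real" where
  "pb_coframe a b df dg =
     (1/a) * (df 0 * dg 1 - df 1 * dg 0) + (1/b) * (df 2 * dg 3 - df 3 * dg 2)"

text \<open>omega = -rho1 d theta /\ dz/z + rho2 du /\ dv in the cylinder chart;
  omega = -rho1/(1-x^2-y^2) dx /\ dy + rho2 du /\ dv in the hemisphere charts.\<close>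
definition pb_cyl :: "real \<Rightarrow> real \<Rightarrow> (pt \<Rightarrow> real) \<Rightarrow> (pt \<Rightarrow> real) \<Rightarrow> par \<Rightarrow> real" where
  "pb_cyl r1 r2 f g p = pb_coframe (- r1) r2 (bdiff_cyl f p) (bdiff_cyl g p)"

definition pb_hemi :: "real \<Rightarrow> real \<Rightarrow> real \<Rightarrow> (pt \<Rightarrow> real) \<Rightarrow> (pt \<Rightarrow> real) \<Rightarrow> par \<Rightarrow> real" where
  "pb_hemi r1 r2 s f g p =
     pb_coframe (- r1 / (1 - (fst p)^2 - (fst (snd p))^2)) r2 (diff_hemi s f p) (diff_hemi s g p)"

definition wedge_nz :: "(nat \<Rightarrow> real) \<Rightarrow> (nat \<Rightarrow> real) \<Rightarrow> bool" where
  "wedge_nz a b \<longleftrightarrow> (\<exists>i<4. \<exists>j<4. a i * b j - a j * b i \<noteq> 0)"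

fun Ck :: "nat \<Rightarrow> par set \<Rightarrow> (par \<Rightarrow> real) \<Rightarrow> bool" where
  "Ck 0 S g = continuous_on S g"
| "Ck (Suc k) S g = ((\<forall>x\<in>S. g differentiable (at x)) \<and>
                     (\<forall>v. Ck k S (\<lambda>x. frechet_derivative g (at x) v)))"

definition Cinf_on :: "par set \<Rightarrow> (par \<Rightarrow> real) \<Rightarrow> bool" where
  "Cinf_on S g \<longleftrightarrow> (\<forall>k. Ck k S g)"

definition local_b :: "(pt \<Rightarrow> real) \<Rightarrow> (par \<Rightarrow> pt) \<Rightarrow> par set \<Rightarrow> par \<Rightarrow> bool" where
  "local_b f \<phi> D p \<longleftrightarrow> (\<exists>U c g. open U \<and> p \<in> U \<and> U \<subseteq> D \<and> Cinf_on U g \<and>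
       (\<forall>q\<in>U. f (\<phi> q) = c * ln \<bar>zc (\<phi> q)\<bar> + g q))"

definition is_bfun :: "(pt \<Rightarrow> real) \<Rightarrow> bool" where
  "is_bfun f \<longleftrightarrow> (\<forall>p\<in>cyl_dom. local_b f cyl cyl_dom p) \<and>
                 (\<forall>s\<in>{1,-1}. \<forall>p\<in>hemi_dom. local_b f (hemi s) hemi_dom p)"

text \<open>b-integrable system (n = 2) on (M, Z, omega) with omega determined by rho1, rho2:
  b-functions, Poisson-commuting on all of M (every chart; the cylinder chart
  contains Z), wedge of b-differentials nonzero a.e. on M and a.e. on Z.\<close>
definition b_integrable :: "real \<Rightarrow> real \<Rightarrow> (pt \<Rightarrow> real) \<Rightarrow> (pt \<Rightarrow> real) \<Rightarrow> bool" where
  "b_integrable r1 r2 f g \<longleftrightarrow>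
     is_bfun f \<and> is_bfun g \<and>
     (\<forall>p\<in>cyl_dom. pb_cyl r1 r2 f g p = 0) \<and>
     (\<forall>s\<in>{1,-1}. \<forall>p\<in>hemi_dom. pb_hemi r1 r2 s f g p = 0) \<and>
     {p \<in> cyl_dom. \<not> wedge_nz (bdiff_cyl f p) (bdiff_cyl g p)} \<in> null_sets lborel \<and>
     (\<forall>s\<in>{1,-1}. {p \<in> hemi_dom. \<not> wedge_nz (diff_hemi s f p) (diff_hemi s g p)} \<in> null_sets lborel) \<and>
     ({(th,u,v). \<not> wedge_nz (bdiff_cyl f (th,0,u,v)) (bdiff_cyl g (th,0,u,v))}
        :: (real \<times> real \<times> real) set) \<in> null_sets lborel"

definition spin_L :: "real \<Rightarrow> real \<Rightarrow> pt \<Rightarrow> real" where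
  "spin_L r1 r2 = (\<lambda>(x,y,z,u,v). r1 * ln \<bar>z\<bar> + r2 / 2 * (u^2 + v^2))"

definition spin_H :: "pt \<Rightarrow> real" where
  "spin_H = (\<lambda>(x,y,z,u,v). (x * u + y * v) / 2)"

end

theory Submission
  imports Defs
begin


inductive sm :: "(par \<Rightarrow> real) \<Rightarrow> bool" where
  sm_const: "sm (\<lambda>p. c)"
| sm_th: "sm (\<lambda>p. fst p)"
| sm_z: "sm (\<lambda>p. fst (snd p))"
| sm_u: "sm (\<lambda>p. fst (snd (snd p)))"
| sm_v: "sm (\<lambda>p. snd (snd (snd p)))"
| sm_cos: "sm (\<lambda>p. cos (fst p))"
| sm_sin: "sm (\<lambda>p. sin (fst p))"
| sm_sq: "sm (\<lambda>p. sqrt (1 - (fst (snd p))^2))"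
| sm_rq: "sm (\<lambda>p. 1 / sqrt (1 - (fst (snd p))^2))"
| sm_add: "sm f \<Longrightarrow> sm g \<Longrightarrow> sm (\<lambda>p. f p + g p)"
| sm_mult: "sm f \<Longrightarrow> sm g \<Longrightarrow> sm (\<lambda>p. f p * g p)"

lemma sm_cong: "sm f \<Longrightarrow> f = g \<Longrightarrow> sm g" by simp

lemma cyl_dom_alt: "cyl_dom = {p. \<bar>fst (snd p)\<bar> < 1}"
  by (auto simp: cyl_dom_def)

lemma open_cyl_dom: "open cyl_dom"
  unfolding cyl_dom_alt
  by (intro open_Collect_less continuous_intros)

lemma sm_deriv:
  assumes "sm g"
  shows "\<exists>D. (\<forall>x\<in>cyl_dom. (g has_derivative D x) (at x)) \<and> (\<forall>v. sm (\<lambda>x. D x v))"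
  using assms
proof induction
  case (sm_const c)
  show ?case by (rule exI[of _ "\<lambda>x w. 0"]) (auto intro: sm.intros)
next
  case sm_th
  show ?case by (rule exI[of _ "\<lambda>x w. fst w"]) (auto intro!: sm.intros derivative_eq_intros)
next
  case sm_z
  show ?case by (rule exI[of _ "\<lambda>x w. fst (snd w)"]) (auto intro!: sm.intros derivative_eq_intros)
next
  case sm_u
  show ?case by (rule exI[of _ "\<lambda>x w. fst (snd (snd w))"]) (auto intro!: sm.intros derivative_eq_intros)
next
  case sm_v
  show ?case by (rule exI[of _ "\<lambda>x w. snd (snd (snd w))"]) (auto intro!: sm.intros derivative_eq_intros)
next
  case sm_cos
  show ?case
  proof (rule exI[of _ "\<lambda>x w. (- fst w) * sin (fst x)"], intro conjI ballI allI)
    fix x :: par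
    have "((\<lambda>p. cos (fst p)) has_derivative (\<lambda>w. fst w * (- sin (fst x)))) (at x)"
      by (rule DERIV_compose_FDERIV[where f=cos]) (auto intro!: derivative_eq_intros)
    then show "((\<lambda>p. cos (fst p)) has_derivative (\<lambda>w. (- fst w) * sin (fst x))) (at x)"
      by (simp add: algebra_simps)
  next
    fix v :: par show "sm (\<lambda>x. (- fst v) * sin (fst x))" by (intro sm.intros)
  qed
next
  case sm_sin
  show ?case
  proof (rule exI[of _ "\<lambda>x w. fst w * cos (fst x)"], intro conjI ballI allI)
    fix x :: par
    show "((\<lambda>p. sin (fst p)) has_derivative (\<lambda>w. fst w * cos (fst x))) (at x)"
      by (rule DERIV_compose_FDERIV[where f=sin]) (auto intro!: derivative_eq_intros)
  next
    fix v :: par show "sm (\<lambda>x. fst v * cos (fst x))" by (intro sm.intros)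
  qed
next
  case sm_sq
  show ?case
  proof (rule exI[of _ "\<lambda>x w. ((- fst (snd w)) * fst (snd x)) * (1 / sqrt (1 - (fst (snd x))^2))"], intro conjI ballI allI)
    fix x :: par assume "x \<in> cyl_dom"
    then have z: "(fst (snd x))^2 < 1" by (auto simp: cyl_dom_alt abs_square_less_1)
    have "DERIV (\<lambda>z. sqrt (1 - z^2)) (fst (snd x)) :> (- (fst (snd x)) * (1 / sqrt (1 - (fst (snd x))^2)))"
      using z by (auto intro!: derivative_eq_intros simp: field_simps)
    note d1 = this
    have d2: "((\<lambda>p. fst (snd p)) has_derivative (\<lambda>w. fst (snd w))) (at x)" by (auto intro!: derivative_eq_intros)
    note DERIV_compose_FDERIV[where g="\<lambda>p. fst (snd p)" and g'="\<lambda>w. fst (snd w)" and x=x and s=UNIV, OF d1 d2]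
    then show "((\<lambda>p. sqrt (1 - (fst (snd p))^2)) has_derivative (\<lambda>w. ((- fst (snd w)) * fst (snd x)) * (1 / sqrt (1 - (fst (snd x))^2)))) (at x)"
      by (rule has_derivative_eq_rhs) (auto simp: fun_eq_iff algebra_simps)
  next
    fix v :: par show "sm (\<lambda>x. ((- fst (snd v)) * fst (snd x)) * (1 / sqrt (1 - (fst (snd x))^2)))"
      by (intro sm.intros)
  qed
next
  case sm_rq
  show ?case
  proof (rule exI[of _ "\<lambda>x w. ((fst (snd w) * fst (snd x)) * (1 / sqrt (1 - (fst (snd x))^2))) * ((1 / sqrt (1 - (fst (snd x))^2)) * (1 / sqrt (1 - (fst (snd x))^2)))"], intro conjI ballI allI)
    fix x :: par assume "x \<in> cyl_dom"
    then have z: "(fst (snd x))^2 < 1" by (auto simp: cyl_dom_alt abs_square_less_1)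
    define q where "q = sqrt (1 - (fst (snd x))^2)"
    have q: "q > 0" "q * q = 1 - (fst (snd x))^2" using z by (auto simp: q_def)
    have "DERIV (\<lambda>z. 1 / sqrt (1 - z^2)) (fst (snd x)) :> ((fst (snd x)) * (1 / q) * ((1/q) * (1/q)))"
      using z q by (auto intro!: derivative_eq_intros simp: field_simps q_def[symmetric])
    note d1 = this
    have d2: "((\<lambda>p. fst (snd p)) has_derivative (\<lambda>w. fst (snd w))) (at x)" by (auto intro!: derivative_eq_intros)
    note DERIV_compose_FDERIV[where g="\<lambda>p. fst (snd p)" and g'="\<lambda>w. fst (snd w)" and x=x and s=UNIV, OF d1 d2]
    then show "((\<lambda>p. 1 / sqrt (1 - (fst (snd p))^2)) has_derivative (\<lambda>w. ((fst (snd w) * fst (snd x)) * (1 / sqrt (1 - (fst (snd x))^2))) * ((1 / sqrt (1 - (fst (snd x))^2)) * (1 / sqrt (1 - (fst (snd x))^2))))) (at x)"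
      by (rule has_derivative_eq_rhs) (auto simp: fun_eq_iff algebra_simps q_def)
  next
    fix v :: par show "sm (\<lambda>x. ((fst (snd v) * fst (snd x)) * (1 / sqrt (1 - (fst (snd x))^2))) * ((1 / sqrt (1 - (fst (snd x))^2)) * (1 / sqrt (1 - (fst (snd x))^2))))"
      by (intro sm.intros)
  qed
next
  case (sm_add f g)
  then obtain Df Dg where f: "\<forall>x\<in>cyl_dom. (f has_derivative Df x) (at x)" "\<forall>v. sm (\<lambda>x. Df x v)"
    and g: "\<forall>x\<in>cyl_dom. (g has_derivative Dg x) (at x)" "\<forall>v. sm (\<lambda>x. Dg x v)" by blast
  show ?case
    by (rule exI[of _ "\<lambda>x w. Df x w + Dg x w"]) (use f g in \<open>auto intro!: sm.intros has_derivative_add\<close>)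
next
  case (sm_mult f g)
  then obtain Df Dg where f: "\<forall>x\<in>cyl_dom. (f has_derivative Df x) (at x)" "\<forall>v. sm (\<lambda>x. Df x v)"
    and g: "\<forall>x\<in>cyl_dom. (g has_derivative Dg x) (at x)" "\<forall>v. sm (\<lambda>x. Dg x v)" by blast
  show ?case
    by (rule exI[of _ "\<lambda>x w. f x * Dg x w + Df x w * g x"]) (use f g sm_mult.hyps in \<open>auto intro!: sm.intros has_derivative_mult\<close>)
qed


lemma Ck_cong:
  assumes "open S" "\<forall>x\<in>S. f x = g x" "Ck k S f"
  shows "Ck k S g"
  using assms(2,3)
proof (induction k arbitrary: f g)
  case 0
  then show ?case using continuous_on_cong by (metis Ck.simps(1))
next
  case (Suc k)
  have fd: "frechet_derivative f (at x) = frechet_derivative g (at x)" if "x \<in> S" for x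
  proof -
    have "(f has_derivative D) (at x) = (g has_derivative D) (at x)" for D
      using has_derivative_transform_within_open[OF _ assms(1) that, of f D UNIV g]
        has_derivative_transform_within_open[OF _ assms(1) that, of g D UNIV f] Suc.prems(1)
      by auto
    then show ?thesis unfolding frechet_derivative_def by simp
  qed
  have "\<forall>x\<in>S. g differentiable (at x)"
  proof
    fix x assume x: "x \<in> S"
    with Suc.prems obtain D where "(f has_derivative D) (at x)" by (auto simp: differentiable_def)
    from has_derivative_transform_within_open[OF this assms(1) x] Suc.prems(1)
    show "g differentiable (at x)" by (auto simp: differentiable_def)
  qed
  moreover have "Ck k S (\<lambda>x. frechet_derivative g (at x) v)" for v
  proof (rule Suc.IH)
    have "\<forall>v. Ck k S (\<lambda>x. frechet_derivative f (at x) v)" using Suc.prems(2) unfolding Ck.simps(2) by (rule conjunct2)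
    then show "Ck k S (\<lambda>x. frechet_derivative f (at x) v)" by blast
    show "\<forall>x\<in>S. frechet_derivative f (at x) v = frechet_derivative g (at x) v" using fd by simp
  qed
  ultimately show ?case by simp
qed

lemma Ck_mono: "Ck k S g \<Longrightarrow> T \<subseteq> S \<Longrightarrow> Ck k T g"
  by (induction k arbitrary: g) (auto intro: continuous_on_subset)

lemma sm_Ck: "sm g \<Longrightarrow> Ck k cyl_dom g"
proof (induction k arbitrary: g)
  case 0
  then obtain D where D: "\<forall>x\<in>cyl_dom. (g has_derivative D x) (at x)" using sm_deriv by blast
  then show ?case
    by (auto intro!: continuous_at_imp_continuous_on has_derivative_continuous)
next
  case (Suc k)
  then obtain D where D: "\<forall>x\<in>cyl_dom. (g has_derivative D x) (at x)" "\<forall>v. sm (\<lambda>x. D x v)"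
    using sm_deriv by blast
  have "Ck k cyl_dom (\<lambda>x. frechet_derivative g (at x) v)" for v
  proof (rule Ck_cong[OF open_cyl_dom _ Suc.IH[OF D(2)[rule_format, of v]]])
    show "\<forall>x\<in>cyl_dom. D x v = frechet_derivative g (at x) v"
      using D(1) frechet_derivative_at by metis
  qed
  then show ?case using D(1) by (auto simp: differentiable_def)
qed

lemma sm_Cinf: "sm g \<Longrightarrow> U \<subseteq> cyl_dom \<Longrightarrow> Cinf_on U g"
  unfolding Cinf_on_def using sm_Ck Ck_mono by blast




lemma hemi_dom_alt: "hemi_dom = {p. (fst p)^2 + (fst (snd p))^2 < 1}"
  by (auto simp: hemi_dom_def)

lemma open_hemi_dom: "open hemi_dom"
  unfolding hemi_dom_alt by (intro open_Collect_less continuous_intros)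

lemma hemi_sub: "hemi_dom \<subseteq> cyl_dom"
proof
  fix p assume "p \<in> hemi_dom"
  then have "(fst (snd p))^2 < 1" unfolding hemi_dom_alt
    by (smt (verit) mem_Collect_eq zero_le_power2)
  then show "p \<in> cyl_dom" by (simp add: cyl_dom_alt abs_square_less_1)
qed

lemma bfun_L: "is_bfun (spin_L r1 r2)"
proof -
  define g where "g = (\<lambda>p::par. (r2/2) * (fst (snd (snd p)) * fst (snd (snd p)) + snd (snd (snd p)) * snd (snd (snd p))))"
  have sg: "sm g" unfolding g_def by (intro sm.intros)
  have "local_b (spin_L r1 r2) cyl cyl_dom p" if "p \<in> cyl_dom" for p
    unfolding local_b_def
    apply (rule exI[of _ cyl_dom], rule exI[of _ r1], rule exI[of _ g])
    using that sm_Cinf[OF sg] open_cyl_dom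
    by (auto simp: g_def spin_L_def cyl_def zc_def power2_eq_square)
  moreover have "local_b (spin_L r1 r2) (hemi s) hemi_dom p" if "p \<in> hemi_dom" for p s
    unfolding local_b_def
    apply (rule exI[of _ hemi_dom], rule exI[of _ r1], rule exI[of _ g])
    using that sm_Cinf[OF sg hemi_sub] open_hemi_dom
    by (auto simp: g_def spin_L_def hemi_def zc_def power2_eq_square)
  ultimately show ?thesis unfolding is_bfun_def by blast
qed

lemma bfun_H: "is_bfun spin_H"
proof -
  define g where "g = (\<lambda>p::par. (1/2) * (sqrt (1 - (fst (snd p))^2) * cos (fst p) * fst (snd (snd p)) + sqrt (1 - (fst (snd p))^2) * sin (fst p) * snd (snd (snd p))))"
  have sg: "sm g" unfolding g_def by (intro sm.intros)
  define h where "h = (\<lambda>p::par. (1/2) * (fst p * fst (snd (snd p)) + fst (snd p) * snd (snd (snd p))))"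
  have sh: "sm h" unfolding h_def by (intro sm.intros)
  have "local_b spin_H cyl cyl_dom p" if "p \<in> cyl_dom" for p
    unfolding local_b_def
    apply (rule exI[of _ cyl_dom], rule exI[of _ 0], rule exI[of _ g])
    using that sm_Cinf[OF sg] open_cyl_dom
    by (auto simp: g_def spin_H_def cyl_def zc_def)
  moreover have "local_b spin_H (hemi s) hemi_dom p" if "p \<in> hemi_dom" for p s
    unfolding local_b_def
    apply (rule exI[of _ hemi_dom], rule exI[of _ 0], rule exI[of _ h])
    using that sm_Cinf[OF sh hemi_sub] open_hemi_dom
    by (auto simp: h_def spin_H_def hemi_def zc_def)
  ultimately show ?thesis unfolding is_bfun_def by blast
qed




lemma line0: "((a,b,c,d)::par) + t *\<^sub>R ebas 0 = (a+t,b,c,d)" by (simp add: ebas_def)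
lemma line1: "((a,b,c,d)::par) + t *\<^sub>R ebas 1 = (a,b+t,c,d)" by (simp add: ebas_def)
lemma line2: "((a,b,c,d)::par) + t *\<^sub>R ebas 2 = (a,b,c+t,d)" by (simp add: ebas_def)
lemma line3: "((a,b,c,d)::par) + t *\<^sub>R ebas 3 = (a,b,c,d+t)" by (simp add: ebas_def)

lemma pd_eq: "((\<lambda>t. F (p + t *\<^sub>R ebas i)) has_real_derivative D) (at 0) \<Longrightarrow> pd i F p = D"
  unfolding pd_def by (rule DERIV_imp_deriv)

lemma ln_abs_sq: "ln \<bar>x::real\<bar> = ln (x^2) / 2"
proof (cases "x = 0")
  case False
  then have "ln (x^2) = 2 * ln \<bar>x\<bar>" using ln_realpow[of "\<bar>x\<bar>" 2] by simp
  then show ?thesis by simp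
qed simp

lemma Lcyl: "spin_L r1 r2 (cyl (th,z,u,v)) = r1 * (ln (z^2) / 2) + r2 / 2 * (u^2 + v^2)"
  by (simp add: spin_L_def cyl_def ln_abs_sq)

lemma Hcyl: "spin_H (cyl (th,z,u,v)) = (sqrt (1 - z^2) * cos th * u + sqrt (1 - z^2) * sin th * v) / 2"
  by (simp add: spin_H_def cyl_def algebra_simps)

lemma Lhemi: "s \<in> {1,-1} \<Longrightarrow> spin_L r1 r2 (hemi s (x,y,u,v)) = r1 * (ln ((1 - x^2 - y^2)^2) / 4) + r2 / 2 * (u^2 + v^2)"
proof -
  assume s: "s \<in> {1,-1}"
  have "\<bar>s * sqrt (1 - x^2 - y^2)\<bar> = sqrt \<bar>1 - x^2 - y^2\<bar>" using s by (auto simp: abs_mult real_sqrt_abs')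
  moreover have "ln (sqrt \<bar>a\<bar>) = ln (a^2) / 4" for a :: real
  proof (cases "a = 0")
    case False
    then have "ln (sqrt \<bar>a\<bar>) = ln \<bar>a\<bar> / 2" by (simp add: ln_sqrt)
    then show ?thesis by (simp add: ln_abs_sq)
  qed simp
  ultimately show ?thesis by (simp add: spin_L_def hemi_def)
qed

lemma Hhemi: "spin_H (hemi s (x,y,u,v)) = (x * u + y * v) / 2"
  by (simp add: spin_H_def hemi_def)

lemma pdL0: "pd 0 (spin_L r1 r2 \<circ> cyl) (th,z,u,v) = 0"
  by (rule pd_eq) (simp add: ebas_def Lcyl o_def)
lemma pdL2: "pd 2 (spin_L r1 r2 \<circ> cyl) (th,z,u,v) = r2 * u"
  by (rule pd_eq) (simp add: ebas_def Lcyl o_def, auto intro!: derivative_eq_intros)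
lemma pdL3: "pd 3 (spin_L r1 r2 \<circ> cyl) (th,z,u,v) = r2 * v"
  by (rule pd_eq) (simp add: ebas_def Lcyl o_def, auto intro!: derivative_eq_intros)
lemma pdL1: "z \<noteq> 0 \<Longrightarrow> pd 1 (spin_L r1 r2 \<circ> cyl) (th,z,u,v) = r1 / z"
  by (rule pd_eq) (simp add: ebas_def Lcyl o_def, auto intro!: derivative_eq_intros simp: field_simps power2_eq_square zero_less_mult_iff)


lemma at0_nontriv: "\<not> trivial_limit (at (0::real))" by simp

lemma bzL: "bz (spin_L r1 r2 \<circ> cyl) (th,z,u,v) = r1"
proof (cases "z = 0")
  case False then show ?thesis by (simp add: bz_def pdL1[unfolded One_nat_def])
next
  case True
  have ev: "\<forall>\<^sub>F t in at 0. r1 = t * pd 1 (spin_L r1 r2 \<circ> cyl) (th,t,u,v)"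
    unfolding eventually_at_filter by (rule always_eventually) (simp add: pdL1[unfolded One_nat_def])
  have "((\<lambda>t. t * pd 1 (spin_L r1 r2 \<circ> cyl) (th,t,u,v)) \<longlongrightarrow> r1) (at 0)"
    by (rule Lim_transform_eventually[OF tendsto_const ev])
  then show ?thesis using True by (simp add: bz_def tendsto_Lim[OF at0_nontriv])
qed

lemma pdH0: "pd 0 (spin_H \<circ> cyl) (th,z,u,v) = (sqrt (1 - z^2) * (- sin th) * u + sqrt (1 - z^2) * cos th * v) / 2"
  by (rule pd_eq) (simp add: ebas_def Hcyl o_def, auto intro!: derivative_eq_intros)
lemma pdH2: "pd 2 (spin_H \<circ> cyl) (th,z,u,v) = sqrt (1 - z^2) * cos th / 2"
  by (rule pd_eq) (simp add: ebas_def Hcyl o_def, auto intro!: derivative_eq_intros)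
lemma pdH3: "pd 3 (spin_H \<circ> cyl) (th,z,u,v) = sqrt (1 - z^2) * sin th / 2"
  by (rule pd_eq) (simp add: ebas_def Hcyl o_def, auto intro!: derivative_eq_intros)
lemma pdH1: "\<bar>z\<bar> < 1 \<Longrightarrow> pd 1 (spin_H \<circ> cyl) (th,z,u,v) = - (z / sqrt (1 - z^2)) * (cos th * u + sin th * v) / 2"
proof (rule pd_eq)
  assume z: "\<bar>z\<bar> < 1"
  then have "z^2 < 1" by (simp add: abs_square_less_1)
  then show "((\<lambda>t. (spin_H \<circ> cyl) ((th,z,u,v) + t *\<^sub>R ebas 1)) has_real_derivative - (z / sqrt (1 - z^2)) * (cos th * u + sin th * v) / 2) (at 0)"
    by (simp add: ebas_def Hcyl o_def, auto intro!: derivative_eq_intros simp: field_simps)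
qed

lemma bzH: "\<bar>z\<bar> < 1 \<Longrightarrow> bz (spin_H \<circ> cyl) (th,z,u,v) = - (z * z / sqrt (1 - z^2)) * (cos th * u + sin th * v) / 2"
proof (cases "z = 0")
  case False
  assume "\<bar>z\<bar> < 1"
  then show ?thesis using False by (simp add: bz_def pdH1[unfolded One_nat_def])
next
  case True
  let ?f = "\<lambda>t. t * (- (t / sqrt (1 - t^2)) * (cos th * u + sin th * v) / 2)"
  have ev: "\<forall>\<^sub>F t in at 0. ?f t = t * pd 1 (spin_H \<circ> cyl) (th,t,u,v)"
    unfolding eventually_at by (rule exI[of _ 1]) (auto simp: pdH1[unfolded One_nat_def])
  have "(?f \<longlongrightarrow> 0) (at 0)"
    by (auto intro!: tendsto_eq_intros)
  then have "((\<lambda>t. t * pd 1 (spin_H \<circ> cyl) (th,t,u,v)) \<longlongrightarrow> 0) (at 0)"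
    by (rule Lim_transform_eventually[OF _ ev])
  then show ?thesis using True by (simp add: bz_def tendsto_Lim[OF at0_nontriv])
qed

lemma wdiv: "x^2 + y^2 < 1 \<Longrightarrow> a * ((1 - x^2 - y^2) * r) / (1 - x^2 - y^2)^2 = r * a / (1 - x^2 - y^2)"
  for x y a r :: real by (simp add: power2_eq_square[of "1 - x^2 - y^2"])
lemma wpos: "x^2 + y^2 < 1 \<Longrightarrow> True" by simp

lemma pdLh0: "s \<in> {1,-1} \<Longrightarrow> x^2 + y^2 < 1 \<Longrightarrow> pd 0 (spin_L r1 r2 \<circ> hemi s) (x,y,u,v) = - r1 * x / (1 - x^2 - y^2)"
  by (rule pd_eq) (simp add: ebas_def Lhemi o_def, auto intro!: derivative_eq_intros simp: wdiv)
lemma pdLh1: "s \<in> {1,-1} \<Longrightarrow> x^2 + y^2 < 1 \<Longrightarrow> pd 1 (spin_L r1 r2 \<circ> hemi s) (x,y,u,v) = - r1 * y / (1 - x^2 - y^2)"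
  by (rule pd_eq) (simp add: ebas_def Lhemi o_def, auto intro!: derivative_eq_intros simp: wdiv)
lemma pdLh2: "s \<in> {1,-1} \<Longrightarrow> pd 2 (spin_L r1 r2 \<circ> hemi s) (x,y,u,v) = r2 * u"
  by (rule pd_eq) (simp add: ebas_def Lhemi o_def, auto intro!: derivative_eq_intros simp: wdiv)
lemma pdLh3: "s \<in> {1,-1} \<Longrightarrow> pd 3 (spin_L r1 r2 \<circ> hemi s) (x,y,u,v) = r2 * v"
  by (rule pd_eq) (simp add: ebas_def Lhemi o_def, auto intro!: derivative_eq_intros simp: wdiv)

lemma pdHh0: "pd 0 (spin_H \<circ> hemi s) (x,y,u,v) = u / 2"
  by (rule pd_eq) (simp add: ebas_def Hhemi o_def, auto intro!: derivative_eq_intros)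
lemma pdHh1: "pd 1 (spin_H \<circ> hemi s) (x,y,u,v) = v / 2"
  by (rule pd_eq) (simp add: ebas_def Hhemi o_def, auto intro!: derivative_eq_intros)
lemma pdHh2: "pd 2 (spin_H \<circ> hemi s) (x,y,u,v) = x / 2"
  by (rule pd_eq) (simp add: ebas_def Hhemi o_def, auto intro!: derivative_eq_intros)
lemma pdHh3: "pd 3 (spin_H \<circ> hemi s) (x,y,u,v) = y / 2"
  by (rule pd_eq) (simp add: ebas_def Hhemi o_def, auto intro!: derivative_eq_intros)




declare One_nat_def [simp del]


lemma alg_cyl:
  fixes r1 r2 q c s u v z B :: real
  assumes r: "r1 > 0" "r2 > 0" "q > 0" "c^2 + s^2 = 1"
    and B: "B = - (z * z / q) * (c * u + s * v) / 2"
    and e1: "r1 * (q * c / 2) - r2 * u * B = 0" and e2: "r1 * (q * s / 2) - r2 * v * B = 0"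
  shows False
proof -
  define P where "P = c * u + s * v"
  have "u * (r1 * (q * c / 2) - r2 * u * B) + v * (r1 * (q * s / 2) - r2 * v * B) = 0"
    using e1 e2 by simp
  then have "r1 * q * P / 2 = r2 * (u * u + v * v) * B" by (simp add: P_def algebra_simps)
  then have "r1 * q * P / 2 = - r2 * (u * u + v * v) * (z * z / q) * P / 2" by (simp add: B P_def)
  then have e: "r1 * q * P = - r2 * (u * u + v * v) * (z * z / q) * P" by simp
  have Kq: "(z * z / q) * q = z * z" using r(3) by simp
  have "r1 * q * q * P = (r1 * q * P) * q" by (simp add: algebra_simps)
  also have "\<dots> = (- r2 * (u * u + v * v) * (z * z / q) * P) * q" using e by simp
  also have "\<dots> = - r2 * (u * u + v * v) * ((z * z / q) * q) * P" by (simp add: algebra_simps)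
  also have "\<dots> = - r2 * (u * u + v * v) * (z * z) * P" using Kq by simp
  finally have "r1 * q * q * P = - r2 * (u * u + v * v) * (z * z) * P" .
  then have "P * (r1 * q * q + r2 * (u * u + v * v) * (z * z)) = 0" by (simp add: algebra_simps)
  moreover have "r1 * q * q + r2 * (u * u + v * v) * (z * z) > 0"
    using r by (intro add_pos_nonneg) (auto intro!: mult_nonneg_nonneg)
  ultimately have "P = 0" by simp
  then have "B = 0" by (simp add: B P_def)
  then have "c = 0" "s = 0" using e1 e2 r by auto
  then show False using r(4) by simp
qed

lemma wedge_cyl:
  assumes r: "r1 > 0" "r2 > 0" and p: "p \<in> cyl_dom"
  shows "wedge_nz (bdiff_cyl (spin_L r1 r2) p) (bdiff_cyl spin_H p)"
proof -
  obtain th z u v where pe: "p = (th,z,u,v)" by (cases p) auto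
  have z: "\<bar>z\<bar> < 1" using p by (simp add: pe cyl_dom_def)
  then have "z^2 < 1" by (simp add: abs_square_less_1)
  then have q: "sqrt (1 - z^2) > 0" by simp
  let ?a = "bdiff_cyl (spin_L r1 r2) p" and ?b = "bdiff_cyl spin_H p"
  have a: "?a 1 = r1" "?a 2 = r2 * u" "?a 3 = r2 * v"
    by (simp_all add: bdiff_cyl_def pe bzL pdL2 pdL3)
  have b: "?b 1 = - (z * z / sqrt (1 - z^2)) * (cos th * u + sin th * v) / 2"
    "?b 2 = sqrt (1 - z^2) * cos th / 2" "?b 3 = sqrt (1 - z^2) * sin th / 2"
    by (simp_all add: bdiff_cyl_def pe bzH[OF z] pdH2 pdH3)
  have "?a 1 * ?b 2 - ?a 2 * ?b 1 \<noteq> 0 \<or> ?a 1 * ?b 3 - ?a 3 * ?b 1 \<noteq> 0"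
  proof (rule ccontr)
    assume "\<not> ?thesis"
    then have e1: "r1 * (sqrt (1 - z^2) * cos th / 2) - r2 * u * ?b 1 = 0"
      and e2: "r1 * (sqrt (1 - z^2) * sin th / 2) - r2 * v * ?b 1 = 0"
      by (simp_all add: a b(2) b(3))
    show False by (rule alg_cyl[OF r q _ b(1) e1 e2]) simp
  qed
  moreover have "(1::nat) < 4" "(2::nat) < 4" "(3::nat) < 4" by simp_all
  ultimately show ?thesis unfolding wedge_nz_def by blast
qed

lemma alg_cyl2:
  fixes r1 r2 A B C D u v :: real
  assumes "r1 > 0" "r2 > 0" "A + u * D - v * C = 0"
  shows "(1 / (- r1)) * (0 * B - r1 * A) + (1 / r2) * ((r2 * u) * D - (r2 * v) * C) = 0"
proof -
  have "(1 / (- r1)) * (0 * B - r1 * A) = A" using assms by simp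
  moreover have "(1 / r2) * ((r2 * u) * D - (r2 * v) * C) = u * D - v * C" using assms by (simp add: field_simps)
  ultimately show ?thesis using assms(3) by simp
qed

lemma pb_cyl0:
  assumes r: "r1 > 0" "r2 > 0" and p: "p \<in> cyl_dom"
  shows "pb_cyl r1 r2 (spin_L r1 r2) spin_H p = 0"
proof -
  obtain th z u v where pe: "p = (th,z,u,v)" by (cases p) auto
  have z: "\<bar>z\<bar> < 1" using p by (simp add: pe cyl_dom_def)
  have La: "bdiff_cyl (spin_L r1 r2) p 0 = 0" "bdiff_cyl (spin_L r1 r2) p 1 = r1"
     "bdiff_cyl (spin_L r1 r2) p 2 = r2 * u" "bdiff_cyl (spin_L r1 r2) p 3 = r2 * v"
    by (simp_all add: bdiff_cyl_def pe bzL pdL0 pdL2 pdL3)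
  have Hb: "bdiff_cyl spin_H p 0 = (sqrt (1 - z^2) * (- sin th) * u + sqrt (1 - z^2) * cos th * v) / 2"
     "bdiff_cyl spin_H p 2 = sqrt (1 - z^2) * cos th / 2" "bdiff_cyl spin_H p 3 = sqrt (1 - z^2) * sin th / 2"
    by (simp_all add: bdiff_cyl_def pe pdH0 pdH2 pdH3)
  show ?thesis unfolding pb_cyl_def pb_coframe_def La Hb
    by (rule alg_cyl2[OF r]) (simp add: field_simps)
qed

lemma alg_hemi:
  fixes r1 r2 w x y u v :: real
  assumes "r1 > 0" "r2 > 0" "w \<noteq> 0"
  shows "(1 / (- r1 / w)) * ((- r1 * x / w) * (v / 2) - (- r1 * y / w) * (u / 2)) + (1 / r2) * ((r2 * u) * (y / 2) - (r2 * v) * (x / 2)) = 0"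
proof -
  have "(1 / (- r1 / w)) * ((- r1 * x / w) * (v / 2) - (- r1 * y / w) * (u / 2)) = (x * v - y * u) / 2"
    using assms by (simp add: field_simps)
  moreover have "(1 / r2) * ((r2 * u) * (y / 2) - (r2 * v) * (x / 2)) = (u * y - v * x) / 2"
    using assms by (simp add: field_simps)
  ultimately show ?thesis by (simp add: algebra_simps)
qed

lemma pb_hemi0:
  assumes r: "r1 > 0" "r2 > 0" and s: "s \<in> {1,-1}" and p: "p \<in> hemi_dom"
  shows "pb_hemi r1 r2 s (spin_L r1 r2) spin_H p = 0"
proof -
  obtain x y u v where pe: "p = (x,y,u,v)" by (cases p) auto
  have w: "x^2 + y^2 < 1" using p by (simp add: pe hemi_dom_def)
  then have w0: "1 - x^2 - y^2 \<noteq> 0" by simp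
  show ?thesis
    unfolding pe pb_hemi_def pb_coframe_def diff_hemi_def fst_conv snd_conv pdLh0[OF s w] pdLh1[OF s w] pdLh2[OF s] pdLh3[OF s]
        pdHh0 pdHh1 pdHh2 pdHh3
    by (rule alg_hemi) (use r w0 in auto)
qed

lemma kk:
  fixes w r1 r2 t g :: real
  assumes w: "w > 0" and r: "r1 > 0" "r2 > 0" and h: "(- r1 * t / w) * (t/2) - r2 * g * (g/2) = 0"
  shows "t = 0 \<and> g = 0"
proof -
  have A: "(- r1 * t / w) * (t/2) = - (1/2) * (r1 * (t * t) / w)" by simp
  have B: "r2 * g * (g/2) = (1/2) * (r2 * (g * g))" by simp
  have "r1 * (t * t) / w \<ge> 0" using r w by simp
  moreover have "r2 * (g * g) \<ge> 0" using r by simp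
  moreover have "r1 * (t * t) / w + r2 * (g * g) = 0" using h unfolding A B by linarith
  ultimately have "r1 * (t * t) / w = 0" "r2 * (g * g) = 0" by linarith+
  then show ?thesis using r w by simp
qed

lemma wedge_hemi:
  assumes r: "r1 > 0" "r2 > 0" and s: "s \<in> {1,-1}"
  shows "{p \<in> hemi_dom. \<not> wedge_nz (diff_hemi s (spin_L r1 r2) p) (diff_hemi s spin_H p)} \<subseteq> {(0,0,0,0)}"
proof
  fix p assume pm: "p \<in> {p \<in> hemi_dom. \<not> wedge_nz (diff_hemi s (spin_L r1 r2) p) (diff_hemi s spin_H p)}"
  obtain x y u v where pe: "p = (x,y,u,v)" by (cases p) auto
  have w: "x^2 + y^2 < 1" using pm by (simp add: pe hemi_dom_def)
  then have wp: "1 - x^2 - y^2 > 0" by simp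
  let ?a = "diff_hemi s (spin_L r1 r2) p" and ?b = "diff_hemi s spin_H p"
  have nw: "\<not> wedge_nz ?a ?b" using pm by simp
  have all0: "\<forall>i<4. \<forall>j<4. ?a i * ?b j - ?a j * ?b i = 0" using nw unfolding wedge_nz_def by blast
  have m02: "?a 0 * ?b 2 - ?a 2 * ?b 0 = 0" using all0 by simp
  have m13: "?a 1 * ?b 3 - ?a 3 * ?b 1 = 0" using all0 by simp
  have e1: "(- r1 * x / (1 - x^2 - y^2)) * (x/2) - r2 * u * (u/2) = 0"
    using m02 by (simp add: diff_hemi_def pe pdLh0[OF s w] pdLh2[OF s] pdHh0 pdHh2)
  have e2: "(- r1 * y / (1 - x^2 - y^2)) * (y/2) - r2 * v * (v/2) = 0"
    using m13 by (simp add: diff_hemi_def pe pdLh1[OF s w] pdLh3[OF s] pdHh1 pdHh3)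
  have k: "(- r1 * t / (1 - x^2 - y^2)) * (t/2) - r2 * g * (g/2) = 0 \<Longrightarrow> t = 0 \<and> g = 0" for t g
    using kk[OF wp r] by blast
  show "p \<in> {(0,0,0,0)}" using k[OF e1] k[OF e2] by (simp add: pe)
qed



theorem lemma4p2:
  fixes \<rho>1 \<rho>2 :: real
  assumes "\<rho>1 > 0" and "\<rho>2 > 0"
  shows "b_integrable \<rho>1 \<rho>2 (spin_L \<rho>1 \<rho>2) spin_H"
proof -
  note r = assms
  have c1: "{p \<in> cyl_dom. \<not> wedge_nz (bdiff_cyl (spin_L \<rho>1 \<rho>2) p) (bdiff_cyl spin_H p)} = {}"
    using wedge_cyl[OF r] by blast
  have c2: "({(th,u,v). \<not> wedge_nz (bdiff_cyl (spin_L \<rho>1 \<rho>2) (th,0,u,v)) (bdiff_cyl spin_H (th,0,u,v))}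
        :: (real \<times> real \<times> real) set) = {}"
    using wedge_cyl[OF r] by (auto simp: cyl_dom_def)
  have c3: "\<forall>s\<in>{1,-1}. {p \<in> hemi_dom. \<not> wedge_nz (diff_hemi s (spin_L \<rho>1 \<rho>2) p) (diff_hemi s spin_H p)} \<in> null_sets lborel"
  proof
    fix s :: real assume s: "s \<in> {1,-1}"
    show "{p \<in> hemi_dom. \<not> wedge_nz (diff_hemi s (spin_L \<rho>1 \<rho>2) p) (diff_hemi s spin_H p)} \<in> null_sets lborel"
      by (rule finite_imp_null_set_lborel, rule finite_subset[OF wedge_hemi[OF r s]]) simp
  qed
  show ?thesis unfolding b_integrable_def
  proof (intro conjI)
    show "{p \<in> cyl_dom. \<not> wedge_nz (bdiff_cyl (spin_L \<rho>1 \<rho>2) p) (bdiff_cyl spin_H p)} \<in> null_sets lborel"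
      unfolding c1 by simp
    show "({(th,u,v). \<not> wedge_nz (bdiff_cyl (spin_L \<rho>1 \<rho>2) (th,0,u,v)) (bdiff_cyl spin_H (th,0,u,v))}
        :: (real \<times> real \<times> real) set) \<in> null_sets lborel"
      unfolding c2 by simp
  qed (use bfun_L bfun_H pb_cyl0[OF r] pb_hemi0[OF r] c3 in auto)
qed

end
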